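(* Let $\Gamma\subset(\mathbb{RP}^1)^m$ be a real EPBQ-curve, and let $a_{jl},b_{jl},e_{jl}$ be the coefficients of its defining relations. Suppose that there exist indices $j\ne l$ such that the four numbers $a_{jl}$, $-b_{jl}$, $-b_{lj}$, $e_{jl}$ are either all positive or all negative, and either $a_{jl}e_{jl}\ge 1$ or $b_{jl}b_{lj}\ge 1$. Then $\Gamma$ is not realisable.
   Context: A real EPBQ-curve is an irreducible real algebraic curve $\Gamma\subset(\mathbb{RP}^1)^m$ (coordinates $z_1,\dots,z_m$) such that (i) for each $j\ne l$, $a_{jl}z_j^2z_l^2+b_{jl}z_j^2-2z_jz_l+b_{lj}z_l^2+e_{jl}=0$ on $\Gamma$ with real coefficients; (ii) no $z_j$ is identically $0$ or $\infty$ on $\Gamma$; (iii) for $j\ne l$, $z_j,z_l$ are neither directly nor inversely proportional on $\Gamma$. The coefficients are uniquely determined, with $a_{jl}=a_{lj}$, $e_{jl}=e_{lj}$. $\Gamma$ is realisable if there exist $n\ge3$, a decomposition $[n]=I_1\sqcup\dots\sqcup I_m$ into nonempty sets ($p\in I_{j(p)}$), nonzero reals $\lambda_1,\dots,\lambda_n$ with $\lambda_p\ne\pm\lambda_q$ whenever $p\ne q$, $j(p)=j(q)$, and reals $g_{pq}=g_{qp}$ for $p\ne q$, $j(p)=j(q)$, such that the matrices $G=(g_{pq})$, $H=(h_{pq})$ defined by $g_{pp}=h_{pp}=1$; $h_{pq}=\frac{2\lambda_p(\lambda_pg_{pq}-\lambda_q)}{\lambda_p^2-\lambda_q^2}$ if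 $p\ne q$, $j(p)=j(q)$; and, if $j(p)\ne j(q)$, $g_{pq}=\frac12\left(-\frac{a_{j(p)j(q)}}{\lambda_p\lambda_q}+\frac{\lambda_qb_{j(p)j(q)}}{\lambda_p}+\frac{\lambda_pb_{j(q)j(p)}}{\lambda_q}-\lambda_p\lambda_qe_{j(p)j(q)}\right)$, $h_{pq}=\frac{\lambda_pb_{j(q)j(p)}}{\lambda_q}-\lambda_p\lambda_qe_{j(p)j(q)}$, satisfy one of: (S) $G$ positive definite; (E) $G$ degenerate positive semidefinite with all principal minors of sizes $2,\dots,n-1$ strictly positive and no row of $H$ a linear combination of rows of $G$; (L) $G$ non-degenerate with negative index of inertia $1$, all principal minors of sizes $2,\dots,n-1$ strictly positive, and $\sum_{q,r}g^{qr}h_{pq}h_{pr}<0$ for all $p$, where $(g^{qr})=G^{-1}$. *)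

theory Defs
  imports Complex_Main "Jordan_Normal_Form.Determinant" "Jordan_Normal_Form.DL_Submatrix"
begin

text \<open>A point of CP^1 is an element of complex option: Some z is the affine point z,
  None is infinity.  Homogeneous representative: Some z = (z:1), None = (1:0).\<close>

fun hrep :: "complex option \<Rightarrow> complex \<times> complex" where
  "hrep (Some z) = (z, 1)"
| "hrep None = (1, 0)"

definition pts :: "nat \<Rightarrow> (nat \<Rightarrow> complex option) set" where
  "pts m = PiE {..<m} (\<lambda>_. UNIV)"

text \<open>A polynomial in the variables X_j (index 2j) and Y_j (index 2j+1), j < m,
  given as a finite list of (coefficient, exponent vector) monomials.\<close>

type_synonym cpoly = "(complex \<times> (nat \<Rightarrow> nat)) list"

definition mon_eval :: "nat \<Rightarrow> (nat \<Rightarrow> nat) \<Rightarrow> (nat \<Rightarrow> complex option) \<Rightarrow> complex" where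
  "mon_eval m \<alpha> z = (\<Prod>j<m. fst (hrep (z j)) ^ \<alpha> (2*j) * snd (hrep (z j)) ^ \<alpha> (2*j+1))"

definition peval :: "nat \<Rightarrow> cpoly \<Rightarrow> (nat \<Rightarrow> complex option) \<Rightarrow> complex" where
  "peval m P z = (\<Sum>(c,\<alpha>)\<leftarrow>P. c * mon_eval m \<alpha> z)"

text \<open>Multihomogeneity (so that vanishing at a point of (CP^1)^m is well defined).\<close>

definition multihom :: "nat \<Rightarrow> cpoly \<Rightarrow> bool" where
  "multihom m P \<longleftrightarrow> (\<exists>d. \<forall>(c,\<alpha>)\<in>set P. \<forall>j<m. \<alpha> (2*j) + \<alpha> (2*j+1) = d j)"

definition zero_set :: "nat \<Rightarrow> cpoly set \<Rightarrow> (nat \<Rightarrow> complex option) set" where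
  "zero_set m S = {z \<in> pts m. \<forall>P\<in>S. peval m P z = 0}"

definition algebraic_set :: "nat \<Rightarrow> (nat \<Rightarrow> complex option) set \<Rightarrow> bool" where
  "algebraic_set m X \<longleftrightarrow> (\<exists>S. (\<forall>P\<in>S. multihom m P) \<and> X = zero_set m S)"

definition real_algebraic_set :: "nat \<Rightarrow> (nat \<Rightarrow> complex option) set \<Rightarrow> bool" where
  "real_algebraic_set m X \<longleftrightarrow>
     (\<exists>S. (\<forall>P\<in>S. multihom m P \<and> (\<forall>(c,\<alpha>)\<in>set P. c \<in> \<real>)) \<and> X = zero_set m S)"

text \<open>Irreducible algebraic curve: an infinite algebraic set all of whose proper
  algebraic subsets are finite (equivalently: irreducible of dimension one).\<close>

definition irreducible_curve :: "nat \<Rightarrow> (nat \<Rightarrow> complex option) set \<Rightarrow> bool" where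
  "irreducible_curve m X \<longleftrightarrow> algebraic_set m X \<and> infinite X \<and>
     (\<forall>Y. algebraic_set m Y \<and> Y \<subset> X \<longrightarrow> finite Y)"

definition irreducible_real_curve :: "nat \<Rightarrow> (nat \<Rightarrow> complex option) set \<Rightarrow> bool" where
  "irreducible_real_curve m X \<longleftrightarrow> irreducible_curve m X \<and> real_algebraic_set m X"

fun pscale :: "complex \<Rightarrow> complex option \<Rightarrow> complex option" where
  "pscale c (Some w) = Some (c * w)"
| "pscale c None = None"

fun pinv :: "complex option \<Rightarrow> complex option" where
  "pinv (Some w) = (if w = 0 then None else Some (inverse w))"
| "pinv None = Some 0"

text \<open>The homogenised relation
  a z_j^2 z_l^2 + b_jl z_j^2 - 2 z_j z_l + b_lj z_l^2 + e = 0 at a point.\<close>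

definition epbq_rel :: "real \<Rightarrow> real \<Rightarrow> real \<Rightarrow> real \<Rightarrow> complex option \<Rightarrow> complex option \<Rightarrow> bool" where
  "epbq_rel a bjl blj e u v \<longleftrightarrow>
     (let (x1, y1) = hrep u; (x2, y2) = hrep v in
       of_real a * x1^2 * x2^2 + of_real bjl * x1^2 * y2^2 - 2 * x1 * y1 * x2 * y2
       + of_real blj * y1^2 * x2^2 + of_real e * y1^2 * y2^2 = 0)"

definition epbq_curve ::
  "nat \<Rightarrow> (nat \<Rightarrow> complex option) set \<Rightarrow> (nat \<Rightarrow> nat \<Rightarrow> real) \<Rightarrow> (nat \<Rightarrow> nat \<Rightarrow> real)
     \<Rightarrow> (nat \<Rightarrow> nat \<Rightarrow> real) \<Rightarrow> bool" where
  "epbq_curve m \<Gamma> a b e \<longleftrightarrow>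
     irreducible_real_curve m \<Gamma> \<and>
     (\<forall>j<m. \<forall>l<m. j \<noteq> l \<longrightarrow> a j l = a l j \<and> e j l = e l j) \<and>
     (\<forall>j<m. \<forall>l<m. j \<noteq> l \<longrightarrow>
        (\<forall>z\<in>\<Gamma>. epbq_rel (a j l) (b j l) (b l j) (e j l) (z j) (z l))) \<and>
     (\<forall>j<m. \<not> (\<forall>z\<in>\<Gamma>. z j = Some 0) \<and> \<not> (\<forall>z\<in>\<Gamma>. z j = None)) \<and>
     (\<forall>j<m. \<forall>l<m. j \<noteq> l \<longrightarrow>
        \<not> (\<exists>c. c \<noteq> 0 \<and> (\<forall>z\<in>\<Gamma>. z j = pscale c (z l))) \<and>
        \<not> (\<exists>c. c \<noteq> 0 \<and> (\<forall>z\<in>\<Gamma>. z j = pscale c (pinv (z l)))))"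

definition pos_def_mat :: "nat \<Rightarrow> real mat \<Rightarrow> bool" where
  "pos_def_mat n G \<longleftrightarrow> (\<forall>x\<in>carrier_vec n. x \<noteq> 0\<^sub>v n \<longrightarrow> x \<bullet> (G *\<^sub>v x) > 0)"

definition pos_semidef_mat :: "nat \<Rightarrow> real mat \<Rightarrow> bool" where
  "pos_semidef_mat n G \<longleftrightarrow> (\<forall>x\<in>carrier_vec n. x \<bullet> (G *\<^sub>v x) \<ge> 0)"

text \<open>Negative index of inertia: number of negative diagonal entries in a diagonalisation
  of the (symmetric) quadratic form (well defined by Sylvester's law of inertia).\<close>

definition neg_index :: "nat \<Rightarrow> real mat \<Rightarrow> nat \<Rightarrow> bool" where
  "neg_index n G k \<longleftrightarrow> (\<exists>P\<in>carrier_mat n n. invertible_mat P \<and>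
      diagonal_mat (transpose_mat P * G * P) \<and>
      card {i. i < n \<and> (transpose_mat P * G * P) $$ (i,i) < 0} = k)"

definition principal_minors_pos :: "nat \<Rightarrow> real mat \<Rightarrow> bool" where
  "principal_minors_pos n G \<longleftrightarrow>
     (\<forall>S. S \<subseteq> {..<n} \<and> 2 \<le> card S \<and> card S \<le> n - 1 \<longrightarrow> det (submatrix G S S) > 0)"

definition realisable_coeffs ::
  "nat \<Rightarrow> (nat \<Rightarrow> nat \<Rightarrow> real) \<Rightarrow> (nat \<Rightarrow> nat \<Rightarrow> real) \<Rightarrow> (nat \<Rightarrow> nat \<Rightarrow> real) \<Rightarrow> bool" where
  "realisable_coeffs m a b e \<longleftrightarrow>
   (\<exists>n (J :: nat \<Rightarrow> nat) (lam :: nat \<Rightarrow> real) (gs :: nat \<Rightarrow> nat \<Rightarrow> real).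
      n \<ge> 3 \<and> J ` {..<n} = {..<m} \<and>
      (\<forall>p<n. lam p \<noteq> 0) \<and>
      (\<forall>p<n. \<forall>q<n. p \<noteq> q \<and> J p = J q \<longrightarrow> lam p \<noteq> lam q \<and> lam p \<noteq> - lam q) \<and>
      (\<forall>p<n. \<forall>q<n. p \<noteq> q \<and> J p = J q \<longrightarrow> gs p q = gs q p) \<and>
      (let
         g = (\<lambda>p q. if p = q then 1
                    else if J p = J q then gs p q
                    else (- a (J p) (J q) / (lam p * lam q) + lam q * b (J p) (J q) / lam p
                          + lam p * b (J q) (J p) / lam q - lam p * lam q * e (J p) (J q)) / 2);
         h = (\<lambda>p q. if p = q then 1
                    else if J p = J q then
                      2 * lam p * (lam p * gs p q - lam q) / (lam p ^ 2 - lam q ^ 2)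
                    else lam p * b (J q) (J p) / lam q - lam p * lam q * e (J p) (J q));
         G = mat n n (\<lambda>(p, q). g p q);
         H = mat n n (\<lambda>(p, q). h p q)
       in
         pos_def_mat n G
       \<or> (pos_semidef_mat n G \<and> det G = 0 \<and> principal_minors_pos n G \<and>
          (\<forall>p<n. \<not> (\<exists>c :: nat \<Rightarrow> real. \<forall>q<n. H $$ (p, q) = (\<Sum>r<n. c r * G $$ (r, q)))))
       \<or> (det G \<noteq> 0 \<and> neg_index n G 1 \<and> principal_minors_pos n G \<and>
          (\<exists>Gi\<in>carrier_mat n n. inverts_mat G Gi \<and>
             (\<forall>p<n. (\<Sum>q<n. \<Sum>r<n. Gi $$ (q, r) * H $$ (p, q) * H $$ (p, r)) < 0)))))"

definition realisable ::
  "nat \<Rightarrow> (nat \<Rightarrow> complex option) set \<Rightarrow> (nat \<Rightarrow> nat \<Rightarrow> real) \<Rightarrow> (nat \<Rightarrow> nat \<Rightarrow> real)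
     \<Rightarrow> (nat \<Rightarrow> nat \<Rightarrow> real) \<Rightarrow> bool" where
  "realisable m \<Gamma> a b e \<longleftrightarrow> epbq_curve m \<Gamma> a b e \<and> realisable_coeffs m a b e"

end

theory Submission
  imports Defs
begin


lemma det2: assumes A: "(A::real mat) \<in> carrier_mat 2 2"
  shows "det A = A$$(0,0) * A$$(1,1) - A$$(0,1) * A$$(1,0)"
proof -
  have "det A = (\<Sum>j<2. A $$ (0,j) * cofactor A 0 j)" by (rule laplace_expansion_row[OF A]) auto
  also have "\<dots> = A$$(0,0) * cofactor A 0 0 + A$$(0,1) * cofactor A 0 1"
    by (simp add: numeral_2_eq_2)
  also have "cofactor A 0 0 = A$$(1,1)"
    unfolding cofactor_def using A
    by (subst det_single) (auto simp: mat_delete_def)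
  also have "cofactor A 0 1 = - A$$(1,0)"
    unfolding cofactor_def using A
    by (subst det_single) (auto simp: mat_delete_def)
  finally show ?thesis by simp
qed

lemma sum_two:
  fixes A B :: real and p q n :: nat
  assumes "p < n" "q < n" "p \<noteq> q"
  shows "(\<Sum>i<n. if i = p then A else if i = q then B else 0) = A + B"
proof -
  have "(\<Sum>i<n. if i = p then A else if i = q then B else 0)
      = (\<Sum>i<n. (if i = p then A else 0) + (if i = q then B else 0))"
    using assms(3) by (intro sum.cong) auto
  also have "\<dots> = A + B" using assms sum.delta[of "{..<n}" p "\<lambda>_. A"] sum.delta[of "{..<n}" q "\<lambda>_. B"] by (simp add: sum.distrib)
  finally show ?thesis .
qed

lemma not_posdef:
  fixes G :: "real mat"
  assumes G: "G \<in> carrier_mat n n" and pq: "p < n" "q < n" "p \<noteq> q"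
    and ent: "G$$(p,p) = 1" "G$$(q,q) = 1" "G$$(p,q) = g" "G$$(q,p) = g" and g: "\<bar>g\<bar> > 1"
  shows "\<not> (\<forall>x\<in>carrier_vec n. x \<noteq> 0\<^sub>v n \<longrightarrow> x \<bullet> (G *\<^sub>v x) > 0)"
proof
  assume H: "\<forall>x\<in>carrier_vec n. x \<noteq> 0\<^sub>v n \<longrightarrow> x \<bullet> (G *\<^sub>v x) > 0"
  define x where "x = vec n (\<lambda>i. if i = p then g else if i = q then -1 else (0::real))"
  have xc: "x \<in> carrier_vec n" by (simp add: x_def)
  have xn: "x \<noteq> 0\<^sub>v n"
  proof
    assume "x = 0\<^sub>v n"
    hence "x $ q = 0" using pq by simp
    thus False using pq by (simp add: x_def)
  qed
  have row: "(G *\<^sub>v x) $ i = G$$(i,p) * g - G$$(i,q)" if i: "i < n" for i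
  proof -
    have "(G *\<^sub>v x) $ i = (\<Sum>k<n. G$$(i,k) * x$k)"
      using G i by (simp add: scalar_prod_def atLeast0LessThan x_def)
    also have "\<dots> = (\<Sum>k<n. if k = p then G$$(i,p) * g else if k = q then - G$$(i,q) else 0)"
      by (intro sum.cong) (auto simp: x_def)
    also have "\<dots> = G$$(i,p) * g - G$$(i,q)" using sum_two[OF pq] by simp
    finally show ?thesis .
  qed
  have "x \<bullet> (G *\<^sub>v x) = (\<Sum>i<n. x$i * (G *\<^sub>v x) $ i)"
    using G by (simp add: scalar_prod_def atLeast0LessThan)
  also have "\<dots> = (\<Sum>i<n. if i = p then g * (G$$(p,p) * g - G$$(p,q))
       else if i = q then - (G$$(q,p) * g - G$$(q,q)) else 0)"
  proof (intro sum.cong refl)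
    fix i assume "i \<in> {..<n}"
    hence i: "i < n" by simp
    show "x$i * (G *\<^sub>v x) $ i = (if i = p then g * (G$$(p,p) * g - G$$(p,q))
       else if i = q then - (G$$(q,p) * g - G$$(q,q)) else 0)"
      using row[OF i] i pq by (simp add: x_def)
  qed
  also have "\<dots> = g * (G$$(p,p) * g - G$$(p,q)) - (G$$(q,p) * g - G$$(q,q))"
    using sum_two[OF pq] by simp
  also have "\<dots> = 1 - g^2" using ent by (simp add: power2_eq_square)
  finally have "x \<bullet> (G *\<^sub>v x) = 1 - g^2" .
  moreover have "g^2 > 1" using less_1_mult[OF g g] by (simp add: power2_eq_square)
  ultimately show False using H xc xn by force
qed

lemma not_minors:
  fixes G :: "real mat"
  assumes G: "G \<in> carrier_mat n n" and pq: "p < q" "q < n"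
    and ent: "G$$(p,p) = 1" "G$$(q,q) = 1" "G$$(p,q) = g" "G$$(q,p) = g" and g: "\<bar>g\<bar> > 1"
  shows "\<not> det (submatrix G {p,q} {p,q}) > 0"
proof -
  have dr: "dim_row G = n" "dim_col G = n" using G by auto
  have cd: "{i. i < n \<and> i \<in> {p,q}} = {p,q}" using pq by auto
  have c2: "card {p,q} = 2" using pq by auto
  have S: "submatrix G {p,q} {p,q} \<in> carrier_mat 2 2"
  proof (rule carrier_matI)
    show "dim_row (submatrix G {p,q} {p,q}) = 2" by (simp only: dim_submatrix dr cd c2)
    show "dim_col (submatrix G {p,q} {p,q}) = 2" by (simp only: dim_submatrix dr cd c2)
  qed
  have s0: "{a\<in>{p,q}. a < p} = {}" using pq by auto
  have s1: "{a\<in>{p,q}. a < q} = {p}" using pq by auto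
  have k0: "card {a\<in>{p,q}. a < p} = 0" unfolding s0 by simp
  have k1: "card {a\<in>{p,q}. a < q} = 1" unfolding s1 by simp
  have pn: "p < n" using pq by simp
  have e00: "submatrix G {p,q} {p,q} $$ (0,0) = 1"
    using submatrix_index_card[where A=G and I="{p,q}" and J="{p,q}" and i=p and j=p] dr pn ent(1)
    unfolding k0 by simp
  have e11: "submatrix G {p,q} {p,q} $$ (1,1) = 1"
    using submatrix_index_card[where A=G and I="{p,q}" and J="{p,q}" and i=q and j=q] dr pq(2) ent(2)
    unfolding k1 by simp
  have e01: "submatrix G {p,q} {p,q} $$ (0,1) = g"
    using submatrix_index_card[where A=G and I="{p,q}" and J="{p,q}" and i=p and j=q] dr pn pq(2) ent(3)
    unfolding k0 k1 by simp
  have e10: "submatrix G {p,q} {p,q} $$ (1,0) = g"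
    using submatrix_index_card[where A=G and I="{p,q}" and J="{p,q}" and i=q and j=p] dr pn pq(2) ent(4)
    unfolding k0 k1 by simp
  have "det (submatrix G {p,q} {p,q}) = 1 - g*g" using det2[OF S] unfolding e00 e11 e01 e10 by simp
  moreover have "g*g > 1" using less_1_mult[OF g g] by simp
  ultimately show ?thesis by simp
qed


lemma key_ineq:
  fixes a \<beta> \<gamma> e x y :: real
  assumes pos: "a > 0" "\<beta> > 0" "\<gamma> > 0" "e > 0" and xy: "x \<noteq> 0" "y \<noteq> 0"
    and ineq: "a * e \<ge> 1 \<or> \<beta> * \<gamma> \<ge> 1"
  shows "\<bar>a/(x*y) + \<beta>*y/x + \<gamma>*x/y + e*x*y\<bar> > 2"
proof -
  define t where "t = x*y"
  have t0: "t \<noteq> 0" using xy by (simp add: t_def)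
  have eq: "(a/(x*y) + \<beta>*y/x + \<gamma>*x/y + e*x*y) * t = a + \<beta>*y^2 + \<gamma>*x^2 + e*t^2"
    using xy by (simp add: t_def field_simps power2_eq_square)
  have main: "a + \<beta>*y^2 + \<gamma>*x^2 + e*t^2 > 2 * \<bar>t\<bar>"
  proof (cases "a * e \<ge> 1")
    case True
    have "e * (a + e*t^2) = a*e + e^2*t^2" by (simp add: algebra_simps power2_eq_square)
    hence "e * (a + e*t^2) \<ge> 1 + e^2*t^2" using True by simp
    moreover have "(1 - e*\<bar>t\<bar>)^2 = 1 + e^2*t^2 - 2*e*\<bar>t\<bar>"
      by (simp add: power2_diff power_mult_distrib)
    moreover have "(1 - e*\<bar>t\<bar>)^2 \<ge> 0" by simp
    ultimately have "e * (a + e*t^2) \<ge> e * (2*\<bar>t\<bar>)" by simp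
    hence "a + e*t^2 \<ge> 2*\<bar>t\<bar>" using pos by simp
    moreover have "\<beta>*y^2 > 0" using pos xy by simp
    moreover have "\<gamma>*x^2 \<ge> 0" using pos by simp
    ultimately show ?thesis by linarith
  next
    case False
    hence bg: "\<beta> * \<gamma> \<ge> 1" using ineq by simp
    have "(\<beta> * \<gamma>) * y^2 \<ge> 1 * y^2" using bg by (intro mult_right_mono) auto
    moreover have "\<gamma> * (\<beta>*y^2 + \<gamma>*x^2) = (\<beta> * \<gamma>) * y^2 + \<gamma>^2*x^2"
      by (simp add: algebra_simps power2_eq_square)
    ultimately have "\<gamma> * (\<beta>*y^2 + \<gamma>*x^2) \<ge> y^2 + \<gamma>^2*x^2" by simp
    moreover have "(\<bar>y\<bar> - \<gamma>*\<bar>x\<bar>)^2 = y^2 + \<gamma>^2*x^2 - 2*\<gamma>*\<bar>t\<bar>"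
      by (simp add: power2_diff power_mult_distrib t_def abs_mult)
    moreover have "(\<bar>y\<bar> - \<gamma>*\<bar>x\<bar>)^2 \<ge> 0" by simp
    ultimately have "\<gamma> * (\<beta>*y^2 + \<gamma>*x^2) \<ge> \<gamma> * (2*\<bar>t\<bar>)" by simp
    hence "\<beta>*y^2 + \<gamma>*x^2 \<ge> 2*\<bar>t\<bar>" using pos by simp
    moreover have "a + e*t^2 > 0" using pos by (simp add: add_pos_nonneg)
    ultimately show ?thesis by linarith
  qed
  have "\<bar>a/(x*y) + \<beta>*y/x + \<gamma>*x/y + e*x*y\<bar> * \<bar>t\<bar> = \<bar>a + \<beta>*y^2 + \<gamma>*x^2 + e*t^2\<bar>"
    using eq by (metis abs_mult)
  also have "\<dots> = a + \<beta>*y^2 + \<gamma>*x^2 + e*t^2" using main by simp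
  finally have "\<bar>a/(x*y) + \<beta>*y/x + \<gamma>*x/y + e*x*y\<bar> * \<bar>t\<bar> > 2 * \<bar>t\<bar>" using main by simp
  thus ?thesis using t0 by (simp add: mult_less_cancel_right)
qed


lemma no_cases:
  fixes G :: "real mat"
  assumes D: "pos_def_mat n G \<or> (P1 \<and> P2 \<and> principal_minors_pos n G \<and> P3)
              \<or> (Q1 \<and> Q2 \<and> principal_minors_pos n G \<and> Q3)"
    and G: "G \<in> carrier_mat n n" and n3: "n \<ge> 3" and pq: "p < n" "q < n" "p \<noteq> q"
    and ent: "G$$(p,p) = 1" "G$$(q,q) = 1" "G$$(q,p) = G$$(p,q)" and g: "\<bar>G$$(p,q)\<bar> > 1"
  shows False
proof -
  have npd: "\<not> pos_def_mat n G"
    using not_posdef[OF G pq ent(1,2) refl ent(3) g] unfolding pos_def_mat_def .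
  have npm: "\<not> principal_minors_pos n G"
  proof
    assume PM: "principal_minors_pos n G"
    have sub: "{p,q} \<subseteq> {..<n}" "2 \<le> card {p,q}" "card {p,q} \<le> n - 1"
      using pq n3 by auto
    have dpos: "det (submatrix G {p,q} {p,q}) > 0"
      using PM sub unfolding principal_minors_pos_def by blast
    show False
    proof (cases "p < q")
      case True
      show False using not_minors[OF G True pq(2) ent(1,2) refl ent(3) g] dpos by simp
    next
      case False
      hence qp: "q < p" using pq by simp
      have "{q,p} = {p,q}" by auto
      thus False using not_minors[OF G qp pq(1) ent(2,1) ent(3) refl] g ent(3) dpos by simp
    qed
  qed
  show False using D npd npm by blast
qed

lemma g_big:
  fixes A B C E x y :: real
  assumes signs: "(A > 0 \<and> - B > 0 \<and> - C > 0 \<and> E > 0) \<or>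
                (A < 0 \<and> - B < 0 \<and> - C < 0 \<and> E < 0)"
    and ineq: "A * E \<ge> 1 \<or> B * C \<ge> 1" and xy: "x \<noteq> 0" "y \<noteq> 0"
  shows "1 < \<bar>(- A / (x * y) + y * B / x + x * C / y - x * y * E) / 2\<bar>"
proof -
  have "2 < \<bar>- A / (x * y) + y * B / x + x * C / y - x * y * E\<bar>"
  proof (cases "A > 0")
    case True
    hence s: "A > 0" "-B > 0" "-C > 0" "E > 0" using signs by auto
    have i: "A * E \<ge> 1 \<or> (-B) * (-C) \<ge> 1" using ineq by simp
    have eq: "- A / (x * y) + y * B / x + x * C / y - x * y * E
       = - (A/(x*y) + (-B)*y/x + (-C)*x/y + E*x*y)"
      by (simp add: algebra_simps)
    show ?thesis unfolding eq abs_minus_cancel by (rule key_ineq[OF s xy i])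
  next
    case False
    hence s: "-A > 0" "B > 0" "C > 0" "-E > 0" using signs by auto
    have i: "(-A) * (-E) \<ge> 1 \<or> B * C \<ge> 1" using ineq by simp
    have eq: "- A / (x * y) + y * B / x + x * C / y - x * y * E
       = ((-A)/(x*y) + B*y/x + C*x/y + (-E)*x*y)"
      by (simp add: algebra_simps)
    show ?thesis unfolding eq by (rule key_ineq[OF s xy i])
  qed
  thus ?thesis by simp
qed



theorem mainTheorem7:
  fixes m :: nat and \<Gamma> :: "(nat \<Rightarrow> complex option) set"
    and a b e :: "nat \<Rightarrow> nat \<Rightarrow> real" and j l :: nat
  assumes curve: "epbq_curve m \<Gamma> a b e"
    and jl: "j < m" "l < m" "j \<noteq> l"
    and signs: "(a j l > 0 \<and> - b j l > 0 \<and> - b l j > 0 \<and> e j l > 0) \<or>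
                (a j l < 0 \<and> - b j l < 0 \<and> - b l j < 0 \<and> e j l < 0)"
    and ineq: "a j l * e j l \<ge> 1 \<or> b j l * b l j \<ge> 1"
  shows "\<not> realisable m \<Gamma> a b e"
  proof
  assume R: "realisable m \<Gamma> a b e"
  have sym: "a l j = a j l" "e l j = e j l" using curve jl unfolding epbq_curve_def by auto
  from R have "realisable_coeffs m a b e" by (simp add: realisable_def)
  thus False
    unfolding realisable_coeffs_def Let_def
    apply (elim exE conjE)
    subgoal premises P for n J lam gs
    proof -
      have "j \<in> J ` {..<n}" "l \<in> J ` {..<n}" using P(2) jl by auto
      then obtain p q where pq: "p < n" "q < n" "J p = j" "J q = l" by auto
      have pq': "p \<noteq> q" using pq jl by auto
      have lp: "lam p \<noteq> 0" "lam q \<noteq> 0" using P(3) pq by auto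
      have g1: "1 < \<bar>(- a j l / (lam p * lam q) + lam q * b j l / lam p + lam p * b l j / lam q - lam p * lam q * e j l) / 2\<bar>"
        using g_big[OF signs ineq lp] .
      have g2: "2 < \<bar>- a j l / (lam p * lam q) + lam q * b j l / lam p + lam p * b l j / lam q - lam p * lam q * e j l\<bar>"
        using g1 by (simp only: abs_divide) (simp add: field_simps)
      have eqX: "lam q * b j l / lam p - a j l / (lam p * lam q) + lam p * b l j / lam q - lam p * lam q * e j l
          = - a j l / (lam p * lam q) + lam q * b j l / lam p + lam p * b l j / lam q - lam p * lam q * e j l"
        by (simp only: minus_divide_left[symmetric]; linarith)
      have gb: "2 < \<bar>lam q * b j l / lam p - a j l / (lam p * lam q) + lam p * b l j / lam q - lam p * lam q * e j l\<bar>"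
        unfolding eqX by (rule g2)
      show False
        apply (rule no_cases[OF P(6), where p=p and q=q])
        using P(1) pq pq' jl gb
        apply (simp_all add: sym)
        done
    qed
    done
qed

end
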